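(* Let $(X,\langle\cdot,\cdot\rangle)$ be a real Hilbert space, let $z\in X$ with $z\neq 0$, and let $T:X\to X$ be a continuous linear operator which is compact and symmetric. For each $\lambda>\|T\|$, let $\hat v_\lambda$ denote the unique solution $x\in X$ of the equation $T(x)-\lambda x=z$ (it exists and is unique by the contraction mapping theorem, and it is nonzero). Let $V$ be the (possibly empty) set of all solutions $x\in X$ of $T(x)-\|T\|x=z$, and set $\theta=\inf_{x\in V}\|x\|^2$ (with the convention $\inf\emptyset=+\infty$). For each $r>0$ let $S_r=\{x\in X:\|x\|^2=r\}$. For $\lambda>\|T\|$ and $r>0$ set $$g(\lambda)=\|\hat v_\lambda\|^2,\qquad \gamma(r)=\sup_{x\in S_r}J(x),\quad\text{where } J(x)=\langle T(x)-2z,x\rangle .$$ Then: $(b_1)$ the function $g$ is decreasing in $]\|T\|,+\infty[$ and $g(]\|T\|,+\infty[)=]0,\theta[$; $(b_2)$ for each $r\in]0,\theta[$, the point $\hat x_r:=\hat v_{g^{-1}(r)}$ is the unique global maximum of $J|_{S_r}$, and every maximizing sequence for $J|_{S_r}$ converges (in norm) to $\hat x_r$; $(b_3)$ the function $r\mapsto \hat x_r$ is continuous in $]0,\theta[$; $(b_4)$ the function $\gamma$ is $C^1$, increasing and strictly concave in $]0,\theta[$; $(b_5)$ $T(\hat x_r)-\gamma'(r)\hat x_r=z$ for all $r\in]0,\theta[$; $(b_6)$ $\gamma'(r)=g^{-1}(r)$ for all $r\in]0,\theta[$.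
   Context: A linear operator $T$ is compact if for each bounded $A\subset X$ the closure $\overline{T(A)}$ is compact; it is symmetric if $\langle T(x),u\rangle=\langle T(u),x\rangle$ for all $x,u\in X$. $\|T\|$ denotes the operator norm. Note $\theta$ may equal $+\infty$, in which case $]0,\theta[=]0,+\infty[$. *)

theory Defs
  imports "HOL-Analysis.Analysis"
begin

definition compact_operator :: "('a::real_normed_vector \<Rightarrow> 'b::real_normed_vector) \<Rightarrow> bool" where
  "compact_operator T \<longleftrightarrow> (\<forall>A. bounded A \<longrightarrow> compact (closure (T ` A)))"

definition symmetric_operator :: "('a::real_inner \<Rightarrow> 'a) \<Rightarrow> bool" where
  "symmetric_operator T \<longleftrightarrow> (\<forall>x u. inner (T x) u = inner (T u) x)"

definition strictly_concave_on :: "real set \<Rightarrow> (real \<Rightarrow> real) \<Rightarrow> bool" where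
  "strictly_concave_on I f \<longleftrightarrow>
     (\<forall>x\<in>I. \<forall>y\<in>I. \<forall>t. x \<noteq> y \<and> 0 < t \<and> t < 1 \<longrightarrow>
        f ((1 - t) * x + t * y) > (1 - t) * f x + t * f y)"

end

theory Submission
  imports Defs
begin


locale trs =
  fixes T :: "'a::{real_inner, complete_space} \<Rightarrow> 'a" and z :: 'a
  assumes znz: "z \<noteq> 0"
    and bl: "bounded_linear T"
    and cpt: "compact_operator T"
    and sym: "symmetric_operator T"
begin

abbreviation "N \<equiv> onorm T"
definition "vh l = (THE x. T x - l *\<^sub>R x = z)"
definition "JJ x = inner (T x - 2 *\<^sub>R z) x"
definition "gg l = (norm (vh l))\<^sup>2"

lemma N_nonneg: "0 \<le> N" using onorm_pos_le[OF bl] .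
lemma T_le: "norm (T x) \<le> N * norm x" using onorm[OF bl] .
lemma T_diff: "T (x - y) = T x - T y" using bl by (simp add: linear_simps)
lemma T_scale: "T (c *\<^sub>R x) = c *\<^sub>R T x" using bl by (simp add: linear_simps)
lemma T_zero: "T 0 = 0" using bl by (simp add: linear_simps)
lemma T_sym: "inner (T x) u = inner (T u) x" using sym unfolding symmetric_operator_def by blast

lemma inner_T_le: "inner (T x) x \<le> N * (norm x)\<^sup>2"
proof -
  have "inner (T x) x \<le> norm (T x) * norm x" by (rule norm_cauchy_schwarz)
  also have "\<dots> \<le> N * norm x * norm x" using T_le by (simp add: mult_right_mono)
  finally show ?thesis by (simp add: power2_eq_square mult.assoc)
qed

lemma ex1: assumes "N < l" shows "\<exists>!x. T x - l *\<^sub>R x = z"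
proof -
  have l0: "0 < l" using N_nonneg assms by linarith
  define f where "f x = (1/l) *\<^sub>R (T x - z)" for x
  have "\<exists>!x. f x = x"
  proof (rule banach_fix_type)
    show "0 \<le> N / l" using N_nonneg l0 by simp
    show "N / l < 1" using assms l0 by simp
    show "\<forall>x y. dist (f x) (f y) \<le> N / l * dist x y"
    proof (intro allI)
      fix x y
      have "dist (f x) (f y) = (1/l) * norm (T (x - y))"
        using l0 by (simp add: f_def dist_norm T_diff flip: scaleR_diff_right)
      also have "\<dots> \<le> (1/l) * (N * norm (x - y))" using T_le l0 by (simp add: divide_right_mono)
      finally show "dist (f x) (f y) \<le> N / l * dist x y" by (simp add: dist_norm)
    qed
  qed
  moreover have "f x = x \<longleftrightarrow> T x - l *\<^sub>R x = z" for x
  proof -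
    have a: "f x = x \<longleftrightarrow> l *\<^sub>R f x = l *\<^sub>R x" using l0 by simp
    have b: "l *\<^sub>R f x = T x - z" using l0 by (simp add: f_def)
    have "f x = x \<longleftrightarrow> T x - z = l *\<^sub>R x" using a b by simp
    also have "\<dots> \<longleftrightarrow> T x - l *\<^sub>R x = z" by (auto simp: algebra_simps)
    finally show ?thesis .
  qed
  ultimately show ?thesis by simp
qed

lemma vh_eq: "N < l \<Longrightarrow> T (vh l) - l *\<^sub>R vh l = z"
  unfolding vh_def by (rule theI'[OF ex1])

lemma vh_unique: "N < l \<Longrightarrow> T x - l *\<^sub>R x = z \<Longrightarrow> vh l = x"
  unfolding vh_def by (rule the1_equality[OF ex1])

lemma sol_nz: "T x - l *\<^sub>R x = z \<Longrightarrow> x \<noteq> 0"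
  using znz T_zero by auto

lemma vh_nz: "N < l \<Longrightarrow> vh l \<noteq> 0" using sol_nz vh_eq by blast

lemma key_id:
  assumes "T v - l *\<^sub>R v = z"
  shows "JJ x - l * (norm x)\<^sup>2 = JJ v - l * (norm v)\<^sup>2 + inner (T (x - v)) (x - v) - l * (norm (x - v))\<^sup>2"
proof -
  have zz: "z = T v - l *\<^sub>R v" using assms by simp
  have s: "inner (T v) x = inner (T x) v" using T_sym by simp
  show ?thesis unfolding JJ_def
    by (simp add: zz T_diff power2_norm_eq_inner inner_diff_left inner_diff_right s inner_commute[of v x] algebra_simps)
qed

lemma key_le:
  assumes "T v - l *\<^sub>R v = z"
  shows "JJ x - l * (norm x)\<^sup>2 \<le> JJ v - l * (norm v)\<^sup>2 - (l - N) * (norm (x - v))\<^sup>2"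
  using key_id[OF assms, of x] inner_T_le[of "x - v"] by (simp add: algebra_simps)

lemma key_lt:
  assumes "T v - l *\<^sub>R v = z" "N < l" "x \<noteq> v"
  shows "JJ x - l * (norm x)\<^sup>2 < JJ v - l * (norm v)\<^sup>2"
proof -
  have "0 < (l - N) * (norm (x - v))\<^sup>2" using assms by simp
  thus ?thesis using key_le[OF assms(1), of x] by linarith
qed

lemma res_bound:
  assumes "T d - l *\<^sub>R d = w" "N < l"
  shows "norm d * (l - N) \<le> norm w"
proof (cases "d = 0")
  case True then show ?thesis by simp
next
  case False
  have "inner (T d) d - l * (norm d)\<^sup>2 = inner w d"
    using assms(1) by (auto simp: inner_diff_left power2_norm_eq_inner)
  hence "(l - N) * (norm d)\<^sup>2 \<le> - inner w d" using inner_T_le[of d] by (simp add: algebra_simps)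
  also have "\<dots> \<le> norm w * norm d" using norm_cauchy_schwarz[of "-w" d] by simp
  finally have "(norm d * (l - N)) * norm d \<le> norm w * norm d" by (simp add: power2_eq_square algebra_simps)
  thus ?thesis using False by (simp add: mult.commute)
qed

end


context trs
begin

lemma vh_ne: assumes "N < a" "a < b" shows "vh a \<noteq> vh b"
proof
  assume e: "vh a = vh b"
  have "T (vh a) - a *\<^sub>R vh a = T (vh a) - b *\<^sub>R vh a"
    using vh_eq[of a] vh_eq[of b] assms e by simp
  hence "(b - a) *\<^sub>R vh a = 0" by (simp add: algebra_simps)
  thus False using assms vh_nz[of a] by simp
qed

lemma gg_decr: assumes "N < a" "a < b" shows "gg b < gg a"
proof -
  have b: "N < b" using assms by linarith
  have h1: "JJ (vh b) - a * gg b < JJ (vh a) - a * gg a"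
    unfolding gg_def using key_lt[OF vh_eq[OF assms(1)] assms(1), of "vh b"] vh_ne[OF assms] by simp
  have h2': "JJ (vh a) - b * gg a \<le> JJ (vh b) - b * gg b - (b - N) * (norm (vh a - vh b))\<^sup>2"
    unfolding gg_def using key_le[OF vh_eq[OF b], of "vh a"] by simp
  have "0 \<le> (b - N) * (norm (vh a - vh b))\<^sup>2" using b by simp
  with h1 h2' have "(b*gg b - a*gg b) - (b*gg a - a * gg a) < 0" by linarith
  hence "(b-a)*gg b < (b-a)*gg a" by (simp add: algebra_simps)
  thus ?thesis using assms by simp
qed

lemma gg_pos: "N < l \<Longrightarrow> 0 < gg l" unfolding gg_def using vh_nz by simp

lemma vh_small: "N < l \<Longrightarrow> norm (vh l) * (l - N) \<le> norm z"
  using res_bound[OF vh_eq] by blast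

lemma vh_cont: "continuous_on {N<..} vh"
  unfolding continuous_on_iff
proof (intro ballI allI impI)
  fix m e :: real assume m: "m \<in> {N<..}" and e: "0 < e"
  hence m': "N < m" by simp
  define c where "c = norm (vh m) + 1"
  have c: "0 < c" unfolding c_def by (simp add: add_nonneg_pos)
  define d where "d = min ((m - N)/2) (e * (m - N) / (2 * c))"
  have d: "0 < d" unfolding d_def using m' e c by simp
  show "\<exists>d>0. \<forall>x'\<in>{N<..}. dist x' m < d \<longrightarrow> dist (vh x') (vh m) < e"
  proof (intro exI conjI ballI impI, rule d)
    fix l assume l: "l \<in> {N<..}" and dl: "dist l m < d"
    hence l': "N < l" by simp
    have eq: "T (vh l - vh m) - l *\<^sub>R (vh l - vh m) = (l - m) *\<^sub>R vh m"
      using vh_eq[OF l'] vh_eq[OF m'] by (simp add: T_diff algebra_simps)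
    have b1: "norm (vh l - vh m) * (l - N) \<le> \<bar>l - m\<bar> * norm (vh m)"
      using res_bound[OF eq l'] by simp
    have lm: "\<bar>l - m\<bar> < d" using dl by (simp add: dist_real_def)
    have "\<bar>l - m\<bar> < (m - N)/2" using lm unfolding d_def by simp
    hence "m - l < (m - N)/2" by (simp only: abs_less_iff) (elim conjE, simp)
    hence ln: "(m - N)/2 < l - N" by (simp add: field_simps)
    have "\<bar>l - m\<bar> * norm (vh m) \<le> \<bar>l - m\<bar> * c" unfolding c_def by (simp add: mult_left_mono)
    also have "\<dots> < d * c" using lm c by simp
    also have "\<dots> \<le> (e * (m - N) / (2 * c)) * c" using c by (intro mult_right_mono) (simp_all add: d_def)
    also have "\<dots> = e * ((m - N)/2)" using c by (simp add: field_simps)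
    also have "\<dots> < e * (l - N)" using ln e by simp
    finally have "norm (vh l - vh m) * (l - N) < e * (l - N)" using b1 by linarith
    hence "norm (vh l - vh m) < e" using l' by simp
    thus "dist (vh l) (vh m) < e" by (simp add: dist_norm)
  qed
qed

lemma gg_cont: "continuous_on {N<..} gg"
  unfolding gg_def by (intro continuous_intros vh_cont)

lemma gg_isCont: "N < l \<Longrightarrow> isCont gg l"
  using gg_cont continuous_on_eq_continuous_at[of "{N<..}" gg] by auto

lemma gg_small: assumes "N < l" "0 < r" shows "\<exists>l'>l. gg l' < r"
proof -
  define l' where "l' = l + 2 * norm z / sqrt r"
  have zp: "0 < norm z" using znz by simp
  have sr: "0 < sqrt r" using assms by simp
  have q: "0 < 2 * norm z / sqrt r" using zp sr by simp
  have l'l: "l' > l" unfolding l'_def using q by simp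
  have ln: "N < l'" using l'l assms by linarith
  have "norm (vh l') * (2 * norm z / sqrt r) \<le> norm (vh l') * (l' - N)"
    using assms(1) unfolding l'_def by (intro mult_left_mono) auto
  also have "\<dots> \<le> norm z" by (rule vh_small[OF ln])
  finally have "norm (vh l') * (2 * norm z / sqrt r) \<le> norm z" .
  hence "norm (vh l') * 2 * norm z \<le> norm z * sqrt r" using sr by (simp add: field_simps)
  hence "norm (vh l') * 2 \<le> sqrt r" using zp by (simp add: mult.commute mult.left_commute)
  hence "norm (vh l') \<le> sqrt r / 2" by simp
  hence "(norm (vh l'))\<^sup>2 \<le> (sqrt r / 2)\<^sup>2" by (simp add: power_mono)
  also have "\<dots> = r / 4" using assms by (simp add: power_divide)
  finally have "gg l' < r" unfolding gg_def using assms by simp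
  thus ?thesis using l'l by blast
qed

lemma gg_lt_V: assumes "N < l" "T x - N *\<^sub>R x = z" shows "gg l < (norm x)\<^sup>2"
proof -
  have ne: "x \<noteq> vh l"
  proof
    assume e: "x = vh l"
    have "T x - N *\<^sub>R x = T x - l *\<^sub>R x" using assms vh_eq[OF assms(1)] e by simp
    hence "(l - N) *\<^sub>R x = 0" by (simp add: algebra_simps)
    thus False using assms sol_nz[OF assms(2)] by simp
  qed
  have h1: "JJ x - l * (norm x)\<^sup>2 < JJ (vh l) - l * gg l"
    unfolding gg_def using key_lt[OF vh_eq[OF assms(1)] assms(1) ne] .
  have h2: "JJ (vh l) - N * gg l \<le> JJ x - N * (norm x)\<^sup>2"
    unfolding gg_def using key_le[OF assms(2), of "vh l"] by simp
  from h1 h2 have "(l * (norm x)\<^sup>2 - N * (norm x)\<^sup>2) - (l*gg l - N * gg l) > 0" by linarith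
  hence "(l - N) * gg l < (l - N) * (norm x)\<^sup>2" by (simp add: algebra_simps)
  thus ?thesis using assms by simp
qed

end


context trs
begin

lemma gg_nonneg: "0 \<le> gg l" unfolding gg_def by simp

lemma lemB: assumes H: "\<forall>l>N. gg l \<le> r" shows "\<exists>x. T x - N *\<^sub>R x = z \<and> (norm x)\<^sup>2 \<le> r"
proof (cases "N = 0")
  case True
  have T0: "\<And>x. T x = 0" using True onorm_eq_0[OF bl] by simp
  have "gg (N+1) \<le> r" using H by simp
  hence r0: "0 \<le> r" using gg_nonneg[of "N+1"] by linarith
  define l where "l = norm z / (sqrt r + 1)"
  have sp: "0 < sqrt r + 1" using r0 by (simp add: add_nonneg_pos)
  have l0: "0 < l" unfolding l_def using znz sp by simp
  have "vh l = (- (1/l)) *\<^sub>R z"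
    by (rule vh_unique) (use l0 True T0 in auto)
  hence "norm (vh l) = norm z / l" using l0 by simp
  also have "\<dots> = sqrt r + 1" unfolding l_def using znz sp by simp
  finally have "gg l = (sqrt r + 1)\<^sup>2" unfolding gg_def by simp
  also have "\<dots> = r + 2 * sqrt r + 1" using r0 by (simp add: power2_sum)
  also have "\<dots> > r" using real_sqrt_ge_zero[OF r0] by linarith
  finally have "r < gg l" .
  moreover have "gg l \<le> r" using H l0 True by simp
  ultimately show ?thesis by simp
next
  case False
  hence Np: "0 < N" using N_nonneg by simp
  define lam where "lam n = N + inverse (real (Suc n))" for n
  have lamN: "N < lam n" for n unfolding lam_def by simp
  define v where "v n = vh (lam n)" for n
  have vr: "(norm (v n))\<^sup>2 \<le> r" for n unfolding v_def using H lamN gg_def by simp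
  have "\<forall>x\<in>range v. norm x \<le> sqrt r" using vr real_le_rsqrt by auto
  hence "bounded (range v)" unfolding bounded_iff by blast
  hence cp: "compact (closure (T ` range v))" using cpt unfolding compact_operator_def by blast
  have inC: "\<forall>n. T (v n) \<in> closure (T ` range v)"
    by (intro allI subsetD[OF closure_subset] imageI rangeI)
  obtain w \<sigma> where "w \<in> closure (T ` range v)" and sm: "strict_mono (\<sigma>::nat\<Rightarrow>nat)" and wl: "((\<lambda>n. T (v n)) \<circ> \<sigma>) \<longlonglongrightarrow> w"
    by (rule seq_compactE[OF compact_imp_seq_compact[OF cp] inC])
  have wl': "(\<lambda>k. T (v (\<sigma> k))) \<longlonglongrightarrow> w" using wl by (simp add: comp_def)
  have "lam \<longlonglongrightarrow> N + 0" unfolding lam_def by (rule tendsto_add[OF tendsto_const LIMSEQ_inverse_real_of_nat])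
  hence "(lam \<circ> \<sigma>) \<longlonglongrightarrow> N" using LIMSEQ_subseq_LIMSEQ[OF _ sm] by simp
  hence ls: "(\<lambda>k. lam (\<sigma> k)) \<longlonglongrightarrow> N" by (simp add: comp_def)
  have vs: "v n = (1 / lam n) *\<^sub>R (T (v n) - z)" for n
  proof -
    have e: "T (v n) - lam n *\<^sub>R v n = z" unfolding v_def using vh_eq[OF lamN] .
    have "lam n \<noteq> 0" using lamN[of n] N_nonneg by linarith
    have e2: "T (v n) - z = lam n *\<^sub>R v n" using e by (simp add: algebra_simps)
    show ?thesis unfolding e2 using \<open>lam n \<noteq> 0\<close> by simp
  qed
  define x where "x = (1 / N) *\<^sub>R (w - z)"
  have "(\<lambda>k. (1 / lam (\<sigma> k)) *\<^sub>R (T (v (\<sigma> k)) - z)) \<longlonglongrightarrow> x"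
    unfolding x_def using Np tendsto_scaleR[OF tendsto_divide[OF tendsto_const ls] tendsto_diff[OF wl' tendsto_const], of 1 z] by simp
  hence vc: "(\<lambda>k. v (\<sigma> k)) \<longlonglongrightarrow> x" using vs by simp
  have "(\<lambda>k. T (v (\<sigma> k)) - lam (\<sigma> k) *\<^sub>R v (\<sigma> k)) \<longlonglongrightarrow> T x - N *\<^sub>R x"
    by (rule tendsto_diff[OF bounded_linear.tendsto[OF bl vc] tendsto_scaleR[OF ls vc]])
  moreover have "(\<lambda>k. T (v (\<sigma> k)) - lam (\<sigma> k) *\<^sub>R v (\<sigma> k)) = (\<lambda>k. z)"
    unfolding v_def using vh_eq[OF lamN] by simp
  ultimately have "(\<lambda>k. z) \<longlonglongrightarrow> T x - N *\<^sub>R x" by simp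
  hence "z = T x - N *\<^sub>R x" by (rule LIMSEQ_unique[OF tendsto_const])
  hence xs: "T x - N *\<^sub>R x = z" by simp
  have "(\<lambda>k. (norm (v (\<sigma> k)))\<^sup>2) \<longlonglongrightarrow> (norm x)\<^sup>2" by (rule tendsto_power[OF tendsto_norm[OF vc]])
  hence "(norm x)\<^sup>2 \<le> r" using vr by (intro LIMSEQ_le_const2) auto
  thus ?thesis using xs by blast
qed

definition "VV = {x. T x - N *\<^sub>R x = z}"
definition "th = (INF x\<in>VV. ereal ((norm x)\<^sup>2))"
definition "II = {r. 0 < r \<and> ereal r < th}"
definition "gi = inv_into {N<..} gg"

lemma th_char: "ereal r < th \<longleftrightarrow> (\<exists>l>N. r < gg l)"
proof
  assume "\<exists>l>N. r < gg l"
  then obtain l where l: "N < l" "r < gg l" by blast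
  have "ereal (gg l) \<le> th" unfolding th_def VV_def
    using gg_lt_V[OF l(1)] by (intro INF_greatest) (simp add: less_imp_le)
  moreover have "ereal r < ereal (gg l)" using l(2) by simp
  ultimately show "ereal r < th" by (meson less_le_trans)
next
  assume a: "ereal r < th"
  show "\<exists>l>N. r < gg l"
  proof (rule ccontr)
    assume "\<not> (\<exists>l>N. r < gg l)"
    hence "\<forall>l>N. gg l \<le> r" using not_less by blast
    then obtain x where x: "T x - N *\<^sub>R x = z" "(norm x)\<^sup>2 \<le> r" using lemB by blast
    have "th \<le> ereal ((norm x)\<^sup>2)" unfolding th_def VV_def using x by (intro INF_lower) simp
    also have "\<dots> \<le> ereal r" using x by simp
    finally show False using a by simp
  qed
qed

lemma II_char: "r \<in> II \<longleftrightarrow> 0 < r \<and> (\<exists>l>N. r < gg l)"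
  unfolding II_def using th_char by simp

lemma gg_range: "gg ` {N<..} = II"
proof
  show "gg ` {N<..} \<subseteq> II"
  proof
    fix y assume "y \<in> gg ` {N<..}"
    then obtain l where l: "N < l" "y = gg l" by auto
    have "N < (N + l)/2" "(N + l)/2 < l" using l by (simp_all add: field_simps)
    hence "gg l < gg ((N + l)/2)" using gg_decr by blast
    thus "y \<in> II" unfolding II_char using l gg_pos \<open>N < (N + l)/2\<close> by blast
  qed
next
  show "II \<subseteq> gg ` {N<..}"
  proof
    fix r assume "r \<in> II"
    then obtain l where r: "0 < r" "N < l" "r < gg l" unfolding II_char by blast
    obtain l' where l': "l' > l" "gg l' < r" using gg_small[OF r(2,1)] by blast
    have "\<exists>m. l \<le> m \<and> m \<le> l' \<and> gg m = r"
      using l' r gg_isCont by (intro IVT2) auto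
    then obtain m where "l \<le> m" "gg m = r" by blast
    thus "r \<in> gg ` {N<..}" using r by force
  qed
qed

lemma gg_inj: "inj_on gg {N<..}"
proof (rule inj_onI)
  fix a b assume a: "a \<in> {N<..}" and b: "b \<in> {N<..}" and e: "gg a = gg b"
  show "a = b"
  proof (rule ccontr)
    assume "a \<noteq> b"
    hence "a < b \<or> b < a" by linarith
    thus False
    proof
      assume "a < b" thus False using gg_decr[of a b] a e by simp
    next
      assume "b < a" thus False using gg_decr[of b a] b e by simp
    qed
  qed
qed

lemma gi_in: "r \<in> II \<Longrightarrow> N < gi r"
  unfolding gi_def using inv_into_into[of r gg "{N<..}"] gg_range by auto

lemma gg_gi: "r \<in> II \<Longrightarrow> gg (gi r) = r"
  unfolding gi_def using f_inv_into_f[of r gg "{N<..}"] gg_range by auto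

lemma gi_gg: "N < l \<Longrightarrow> gi (gg l) = l"
  unfolding gi_def using inv_into_f_f[OF gg_inj] by simp

end


context trs
begin

definition "Sp r = {x. (norm x)\<^sup>2 = r}"
definition "gam r = Sup (JJ ` Sp r)"
definition "xh r = vh (gi r)"

lemma gg_less_iff: "N < a \<Longrightarrow> N < b \<Longrightarrow> gg a < gg b \<longleftrightarrow> b < a"
proof
  assume a: "N < a" "N < b" "gg a < gg b"
  show "b < a"
  proof (rule ccontr)
    assume "\<not> b < a"
    hence "a < b \<or> a = b" by linarith
    thus False using gg_decr[of a b] a by auto
  qed
qed (rule gg_decr)

lemma xh_eq: "r \<in> II \<Longrightarrow> T (xh r) - gi r *\<^sub>R xh r = z"
  unfolding xh_def using vh_eq[OF gi_in] .

lemma xh_norm: "r \<in> II \<Longrightarrow> (norm (xh r))\<^sup>2 = r"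
  using gg_gi unfolding gg_def xh_def by simp

lemma xh_S: "r \<in> II \<Longrightarrow> xh r \<in> Sp r" unfolding Sp_def using xh_norm by simp

lemma xh_max: assumes "r \<in> II" "x \<in> Sp r"
  shows "JJ x \<le> JJ (xh r) - (gi r - N) * (norm (x - xh r))\<^sup>2"
  using key_le[OF xh_eq[OF assms(1)], of x] xh_norm[OF assms(1)] assms(2) unfolding Sp_def by simp

lemma xh_strict: assumes "r \<in> II" "x \<in> Sp r" "x \<noteq> xh r" shows "JJ x < JJ (xh r)"
proof -
  have "0 < (gi r - N) * (norm (x - xh r))\<^sup>2" using gi_in[OF assms(1)] assms(3) by simp
  thus ?thesis using xh_max[OF assms(1,2)] by linarith
qed

lemma gam_eq: "r \<in> II \<Longrightarrow> gam r = JJ (xh r)"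
  unfolding gam_def
proof (rule cSup_eq_maximum)
  assume r: "r \<in> II"
  show "JJ (xh r) \<in> JJ ` Sp r" using xh_S[OF r] by simp
  fix y assume "y \<in> JJ ` Sp r"
  then obtain x where "x \<in> Sp r" "y = JJ x" by auto
  moreover have "0 \<le> (gi r - N) * (norm (x - xh r))\<^sup>2" using gi_in[OF r] by simp
  ultimately show "y \<le> JJ (xh r)" using xh_max[OF r] by fastforce
qed

lemma maxseq: assumes r: "r \<in> II" and s: "\<forall>n. s n \<in> Sp r" and lim: "(\<lambda>n. JJ (s n)) \<longlonglongrightarrow> gam r"
  shows "s \<longlonglongrightarrow> xh r"
  unfolding LIMSEQ_iff
proof (intro allI impI)
  fix e :: real assume e: "0 < e"
  define c where "c = gi r - N"
  have c: "0 < c" unfolding c_def using gi_in[OF r] by simp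
  have "0 < c * e\<^sup>2" using c e by simp
  then obtain n0 where n0: "\<forall>n\<ge>n0. norm (JJ (s n) - gam r) < c * e\<^sup>2"
    using lim[unfolded LIMSEQ_iff, rule_format, OF \<open>0 < c * e\<^sup>2\<close>] by blast
  show "\<exists>no. \<forall>n\<ge>no. norm (s n - xh r) < e"
  proof (intro exI allI impI)
    fix n assume "n0 \<le> n"
    hence a: "\<bar>JJ (s n) - JJ (xh r)\<bar> < c * e\<^sup>2" using n0 gam_eq[OF r] by simp
    have b: "JJ (s n) \<le> JJ (xh r) - c * (norm (s n - xh r))\<^sup>2" using xh_max[OF r s[rule_format]] unfolding c_def .
    have "c * (norm (s n - xh r))\<^sup>2 < c * e\<^sup>2" using a b by linarith
    hence "(norm (s n - xh r))\<^sup>2 < e\<^sup>2" using c by simp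
    thus "norm (s n - xh r) < e" using e by (simp add: power_less_imp_less_base)
  qed
qed

lemma supergrad: assumes r: "r \<in> II" and s: "s \<in> II"
  shows "gam s \<le> gam r + gi r * (s - r)" and "s \<noteq> r \<Longrightarrow> gam s < gam r + gi r * (s - r)"
proof -
  have k: "JJ (xh s) - gi r * s \<le> JJ (xh r) - gi r * r - (gi r - N) * (norm (xh s - xh r))\<^sup>2"
    using key_le[OF xh_eq[OF r], of "xh s"] xh_norm[OF r] xh_norm[OF s] by simp
  have nn: "0 \<le> (gi r - N) * (norm (xh s - xh r))\<^sup>2" using gi_in[OF r] by simp
  show "gam s \<le> gam r + gi r * (s - r)" using k nn gam_eq[OF r] gam_eq[OF s]
    by (simp add: algebra_simps)
  assume "s \<noteq> r"
  have "xh s \<noteq> xh r"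
  proof
    assume e: "xh s = xh r"
    have "s = r" using xh_norm[OF r] xh_norm[OF s] e by simp
    thus False using \<open>s \<noteq> r\<close> by simp
  qed
  hence "0 < (gi r - N) * (norm (xh s - xh r))\<^sup>2" using gi_in[OF r] by simp
  thus "gam s < gam r + gi r * (s - r)" using k gam_eq[OF r] gam_eq[OF s]
    by (simp add: algebra_simps)
qed

lemma II_open: "open II"
proof -
  have e: "II = {0<..} \<inter> {r. ereal r < th}" unfolding II_def greaterThan_def by blast
  have c: "continuous_on UNIV (\<lambda>x::real. ereal x)" by (rule continuous_on_ereal[OF continuous_on_id])
  have o: "open {r. ereal r < th}"
    by (rule open_Collect_less[OF c continuous_on_const])
  show ?thesis unfolding e by (rule open_Int[OF open_greaterThan o])
qed

lemma gi_cont: "continuous_on II gi"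
  unfolding continuous_on_iff
proof (intro ballI allI impI)
  fix r e :: real assume r: "r \<in> II" and e: "0 < e"
  define l where "l = gi r"
  have l: "N < l" "gg l = r" unfolding l_def using gi_in[OF r] gg_gi[OF r] by auto
  define e' where "e' = min e ((l - N)/2)"
  have e'1: "0 < e'" unfolding e'_def using e l by simp
  have e'2: "e' \<le> e" unfolding e'_def by (rule min.cobounded1)
  have e'3: "e' \<le> (l - N)/2" unfolding e'_def by (rule min.cobounded2)
  note e' = e'1 e'2 e'3
  define a where "a = l - e'"
  define b where "b = l + e'"
  have a: "N < a" "a < l" unfolding a_def using e' l by (auto simp: field_simps)
  have b: "N < b" "l < b" unfolding b_def using e' l by auto
  have ga: "r < gg a" using gg_decr[OF a] l by simp
  have gb: "gg b < r" using gg_decr[OF l(1) b(2)] l by simp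
  define d where "d = min (gg a - r) (r - gg b)"
  have d: "0 < d" unfolding d_def using ga gb by simp
  show "\<exists>d>0. \<forall>s\<in>II. dist s r < d \<longrightarrow> dist (gi s) (gi r) < e"
  proof (intro exI conjI ballI impI, rule d)
    fix s assume s: "s \<in> II" and ds: "dist s r < d"
    have "\<bar>s - r\<bar> < d" using ds by (simp add: dist_real_def)
    hence sb: "gg b < s" and sa: "s < gg a" unfolding d_def by (simp_all add: abs_less_iff)
    define m where "m = gi s"
    have m: "N < m" "gg m = s" unfolding m_def using gi_in[OF s] gg_gi[OF s] by auto
    have "a < m" using gg_less_iff[OF m(1) a(1)] sa m(2) by simp
    moreover have "m < b" using gg_less_iff[OF b(1) m(1)] sb m(2) by simp
    ultimately have "\<bar>m - l\<bar> < e'" unfolding a_def b_def by (simp add: abs_less_iff)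
    thus "dist (gi s) (gi r) < e" using e' unfolding m_def l_def by (simp add: dist_real_def)
  qed
qed

lemma gi_tendsto: "r \<in> II \<Longrightarrow> (gi \<longlongrightarrow> gi r) (at r)"
  using continuous_on_eq_continuous_at[OF II_open, of gi] gi_cont unfolding isCont_def by blast

lemma gam_deriv: assumes r: "r \<in> II" shows "(gam has_real_derivative gi r) (at r)"
  unfolding has_field_derivative_iff
proof (rule tendsto_sandwich)
  have ev: "eventually (\<lambda>y. y \<in> II - {r}) (at r)" by (rule eventually_at_in_open[OF II_open r])
  have bnd: "min (gi y) (gi r) \<le> (gam y - gam r) / (y - r) \<and> (gam y - gam r) / (y - r) \<le> max (gi y) (gi r)"
    if y: "y \<in> II - {r}" for y
  proof -
    have y': "y \<in> II" "y \<noteq> r" using y by auto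
    have u: "gam y - gam r \<le> gi r * (y - r)" using supergrad(1)[OF r y'(1)] by simp
    have w: "gam r - gam y \<le> gi y * (r - y)" using supergrad(1)[OF y'(1) r] by simp
    show ?thesis
    proof (cases "r < y")
      case True
      hence p: "0 < y - r" by simp
      have "(gam y - gam r) / (y - r) \<le> gi r" using u p by (simp add: divide_le_eq)
      moreover have "gi y \<le> (gam y - gam r) / (y - r)" using w p by (simp add: le_divide_eq algebra_simps)
      ultimately show ?thesis by linarith
    next
      case False
      hence p: "y - r < 0" using y'(2) by simp
      have "gi r \<le> (gam y - gam r) / (y - r)" using u p by (simp add: le_divide_eq)
      moreover have "(gam y - gam r) / (y - r) \<le> gi y" using w p by (simp add: divide_le_eq algebra_simps)
      ultimately show ?thesis by linarith
    qed
  qed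
  show "eventually (\<lambda>y. min (gi y) (gi r) \<le> (gam y - gam r) / (y - r)) (at r)"
    using ev by (rule eventually_mono) (rule conjunct1[OF bnd])
  show "eventually (\<lambda>y. (gam y - gam r) / (y - r) \<le> max (gi y) (gi r)) (at r)"
    using ev by (rule eventually_mono) (rule conjunct2[OF bnd])
  show "((\<lambda>y. min (gi y) (gi r)) \<longlongrightarrow> gi r) (at r)"
    using tendsto_min[OF gi_tendsto[OF r] tendsto_const[of "gi r"]] by simp
  show "((\<lambda>y. max (gi y) (gi r)) \<longlongrightarrow> gi r) (at r)"
    using tendsto_max[OF gi_tendsto[OF r] tendsto_const[of "gi r"]] by simp
qed

lemma II_convex: assumes "x \<in> II" "y \<in> II" "0 \<le> t" "t \<le> 1" shows "(1 - t) * x + t * y \<in> II"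
proof -
  let ?m = "(1 - t) * x + t * y"
  have x: "0 < x" "ereal x < th" and y: "0 < y" "ereal y < th" using assms(1,2) unfolding II_def by auto
  have "(1 - t) * min x y + t * min x y \<le> ?m" using assms(3,4) by (intro add_mono mult_left_mono) auto
  hence m1: "min x y \<le> ?m" by (simp add: algebra_simps)
  have "?m \<le> (1 - t) * max x y + t * max x y" using assms(3,4) by (intro add_mono mult_left_mono) auto
  hence "?m \<le> max x y" by (simp add: algebra_simps)
  hence "?m \<le> x \<or> ?m \<le> y" by (simp add: le_max_iff_disj)
  hence "ereal ?m < th"
  proof
    assume "?m \<le> x" hence "ereal ?m \<le> ereal x" by simp
    thus "ereal ?m < th" using x(2) by (rule le_less_trans)
  next
    assume "?m \<le> y" hence "ereal ?m \<le> ereal y" by simp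
    thus "ereal ?m < th" using y(2) by (rule le_less_trans)
  qed
  moreover have "0 < ?m" using m1 x y by simp
  ultimately show ?thesis unfolding II_def by simp
qed

lemma gam_concave: "strictly_concave_on II gam"
  unfolding strictly_concave_on_def
proof (intro ballI allI impI)
  fix x y t :: real assume x: "x \<in> II" and y: "y \<in> II" and h: "x \<noteq> y \<and> 0 < t \<and> t < 1"
  let ?m = "(1 - t) * x + t * y"
  have m: "?m \<in> II" using II_convex[OF x y] h by simp
  have xm: "x \<noteq> ?m" using h by (auto simp: algebra_simps)
  have ym: "y \<noteq> ?m"
  proof
    assume "y = ?m" hence "(1 - t) * (y - x) = 0" by (simp add: algebra_simps)
    thus False using h by simp
  qed
  have gx: "gam x < gam ?m + gi ?m * (x - ?m)" using supergrad(2)[OF m x] xm by simp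
  have gy: "gam y < gam ?m + gi ?m * (y - ?m)" using supergrad(2)[OF m y] ym by simp
  have "(1 - t) * gam x < (1 - t) * (gam ?m + gi ?m * (x - ?m))" using gx h by simp
  moreover have "t * gam y < t * (gam ?m + gi ?m * (y - ?m))" using gy h by simp
  moreover have "(1 - t) * (gam ?m + gi ?m * (x - ?m)) + t * (gam ?m + gi ?m * (y - ?m)) = gam ?m"
    by (simp add: algebra_simps)
  ultimately show "gam ?m > (1 - t) * gam x + t * gam y" by linarith
qed

lemma gam_mono: "strict_mono_on II gam"
proof (rule strict_mono_onI)
  fix r s assume r: "r \<in> II" and s: "s \<in> II" and rs: "r < s"
  have "gam r \<le> gam s + gi s * (r - s)" by (rule supergrad(1)[OF s r])
  moreover have "0 < gi s * (s - r)" using gi_in[OF s] N_nonneg rs by simp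
  ultimately show "gam r < gam s" by (simp add: algebra_simps)
qed

lemma xh_cont: "continuous_on II xh"
  unfolding xh_def
  by (rule continuous_on_compose2[OF vh_cont gi_cont]) (use gi_in in auto)

end


context trs
begin

lemma main:
  "((\<forall>a b. N < a \<and> a < b \<longrightarrow> gg b < gg a) \<and> gg ` {N<..} = II)
   \<and> (\<forall>r\<in>II. xh r \<in> Sp r \<and> (\<forall>x\<in>Sp r. x \<noteq> xh r \<longrightarrow> JJ x < JJ (xh r)) \<and>
      (\<forall>s. (\<forall>n. s n \<in> Sp r) \<and> (\<lambda>n. JJ (s n)) \<longlonglongrightarrow> gam r \<longrightarrow> s \<longlonglongrightarrow> xh r))
   \<and> (continuous_on II xh)
   \<and> ((\<exists>\<gamma>'. (\<forall>r\<in>II. (gam has_real_derivative \<gamma>' r) (at r)) \<and> continuous_on II \<gamma>')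
      \<and> strict_mono_on II gam \<and> strictly_concave_on II gam)
   \<and> (\<forall>r\<in>II. T (xh r) - deriv gam r *\<^sub>R xh r = z)
   \<and> (\<forall>r\<in>II. deriv gam r = gi r)"
proof -
  have d: "deriv gam r = gi r" if "r \<in> II" for r
    using DERIV_imp_deriv[OF gam_deriv[OF that]] .
  show ?thesis
  proof (intro conjI ballI allI impI)
    show "\<And>a b. N < a \<and> a < b \<Longrightarrow> gg b < gg a" using gg_decr by blast
    show "gg ` {N<..} = II" by (rule gg_range)
    show "\<And>r. r \<in> II \<Longrightarrow> xh r \<in> Sp r" by (rule xh_S)
    show "\<And>r x. r \<in> II \<Longrightarrow> x \<in> Sp r \<Longrightarrow> x \<noteq> xh r \<Longrightarrow> JJ x < JJ (xh r)" by (rule xh_strict)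
    show "\<And>r s. r \<in> II \<Longrightarrow> (\<forall>n. s n \<in> Sp r) \<and> (\<lambda>n. JJ (s n)) \<longlonglongrightarrow> gam r \<Longrightarrow> s \<longlonglongrightarrow> xh r"
      using maxseq by blast
    show "continuous_on II xh" by (rule xh_cont)
    show "\<exists>\<gamma>'. (\<forall>r\<in>II. (gam has_real_derivative \<gamma>' r) (at r)) \<and> continuous_on II \<gamma>'"
      using gam_deriv gi_cont by blast
    show "strict_mono_on II gam" by (rule gam_mono)
    show "strictly_concave_on II gam" by (rule gam_concave)
    show "\<And>r. r \<in> II \<Longrightarrow> T (xh r) - deriv gam r *\<^sub>R xh r = z" using d xh_eq by simp
    show "\<And>r. r \<in> II \<Longrightarrow> deriv gam r = gi r" by (rule d)
  qed
qed

end

theorem theorem1: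
  fixes T :: "'a::{real_inner, complete_space} \<Rightarrow> 'a" and z :: 'a
  assumes "z \<noteq> 0"
    and "bounded_linear T"
    and "compact_operator T"
    and "symmetric_operator T"
  defines "vhat \<equiv> (\<lambda>l::real. THE x. T x - l *\<^sub>R x = z)"
    and "V \<equiv> {x. T x - onorm T *\<^sub>R x = z}"
  defines "\<theta> \<equiv> (INF x\<in>V. ereal ((norm x)\<^sup>2))"
    and "S \<equiv> (\<lambda>r::real. {x. (norm x)\<^sup>2 = r})"
    and "g \<equiv> (\<lambda>l. (norm (vhat l))\<^sup>2)"
    and "J \<equiv> (\<lambda>x. inner (T x - 2 *\<^sub>R z) x)"
  defines "\<gamma> \<equiv> (\<lambda>r. Sup (J ` S r))"
    and "ginv \<equiv> inv_into {onorm T<..} g"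
    and "I \<equiv> {r::real. 0 < r \<and> ereal r < \<theta>}"
  defines "xhat \<equiv> (\<lambda>r. vhat (ginv r))"
  shows
    "((\<forall>a b. onorm T < a \<and> a < b \<longrightarrow> g b < g a) \<and> g ` {onorm T<..} = I)
   \<and> (\<forall>r\<in>I. xhat r \<in> S r \<and> (\<forall>x\<in>S r. x \<noteq> xhat r \<longrightarrow> J x < J (xhat r)) \<and>
      (\<forall>s. (\<forall>n. s n \<in> S r) \<and> (\<lambda>n. J (s n)) \<longlonglongrightarrow> \<gamma> r \<longrightarrow> s \<longlonglongrightarrow> xhat r))
   \<and> (continuous_on I xhat)
   \<and> ((\<exists>\<gamma>'. (\<forall>r\<in>I. (\<gamma> has_real_derivative \<gamma>' r) (at r)) \<and> continuous_on I \<gamma>')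
      \<and> strict_mono_on I \<gamma> \<and> strictly_concave_on I \<gamma>)
   \<and> (\<forall>r\<in>I. T (xhat r) - deriv \<gamma> r *\<^sub>R xhat r = z)
   \<and> (\<forall>r\<in>I. deriv \<gamma> r = ginv r)"
proof -
  interpret trs T z by (rule trs.intro[OF assms(1-4)])
  have e1: "vhat = vh" unfolding vhat_def by (rule ext) (simp add: vh_def)
  have e2: "V = VV" unfolding V_def VV_def by simp
  have e3: "\<theta> = th" unfolding \<theta>_def e2 th_def by simp
  have e4: "S = Sp" unfolding S_def by (rule ext) (simp add: Sp_def)
  have e5: "g = gg" unfolding g_def e1 by (rule ext) (simp add: gg_def)
  have e6: "J = JJ" unfolding J_def by (rule ext) (simp add: JJ_def)
  have e7: "\<gamma> = gam" unfolding \<gamma>_def e4 e6 by (rule ext) (simp add: gam_def)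
  have e8: "ginv = gi" unfolding ginv_def e5 gi_def by simp
  have e9: "I = II" unfolding I_def e3 II_def by simp
  have e10: "xhat = xh" unfolding xhat_def e1 e8 by (rule ext) (simp add: xh_def)
  show ?thesis unfolding e1 e2 e3 e4 e5 e6 e7 e8 e9 e10 by (rule main)
qed

end
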